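(* Let $M>0$ and $p,K\in\mathbb{N}$. Let $\boldsymbol\Phi(p,K)$ denote the set of all continuous maps from $\mathbb{R}^p$ to $\mathbb{R}^K$. Then \[ \inf_{\boldsymbol \phi \in \boldsymbol \Phi(p,K)} \frac{1}{(2M)^{2p}} \int_{[-M,M]^{p}} \int_{[-M,M]^{p}} \Big| -\|\boldsymbol x-\boldsymbol x'\|_2^2 - \langle \boldsymbol \phi(\boldsymbol x),\boldsymbol \phi(\boldsymbol x') \rangle \Big| \,\mathrm{d} \boldsymbol x\, \mathrm{d} \boldsymbol x' \geq \frac{2pM^2}{3}. \]
   Context: $\langle\cdot,\cdot\rangle$ denotes the standard Euclidean inner product on $\mathbb{R}^K$ and $\|\cdot\|_2$ the Euclidean norm on $\mathbb{R}^p$. *)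

theory Defs
  imports "HOL-Analysis.Analysis"
begin

definition cube :: "real \<Rightarrow> (real ^ 'p) set" where
  "cube M = {x. \<forall>i. x $ i \<in> {-M..M}}"

end

theory Submission
  imports Defs
begin

lemma Basis_cart_real: "(Basis :: (real^'n) set) = range (\<lambda>i. axis i 1)"
  by (auto simp: Basis_vec_def)

lemma inj_axis1: "inj (\<lambda>i::'n::finite. axis i (1::real))"
  by (auto intro!: injI simp: axis_eq_axis)

lemma prod_Basis_cart: "(\<Prod>b\<in>(Basis :: (real^'n) set). g b) = (\<Prod>j\<in>UNIV. g (axis j 1))"
  unfolding Basis_cart_real by (subst prod.reindex[OF inj_axis1]) simp

lemma cube_cbox: "cube M = cbox (\<chi> i. -M) (\<chi> i. M :: real^'p)"
  by (auto simp: cube_def mem_box_cart)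

lemma compact_cube: "compact (cube M)"
  unfolding cube_cbox by simp

lemma measure_cube: assumes "M > 0" shows "measure lborel (cube M :: (real^'p) set) = (2*M)^CARD('p)"
proof -
  have "(0::real^'p) \<in> cbox (\<chi> i. -M) (\<chi> i. M)" using assms by (simp add: mem_box_cart)
  then show ?thesis unfolding cube_cbox
    by (subst content_cbox_cart) auto
qed

lemma cube_sets[measurable]: "cube M \<in> sets lborel"
  using borel_compact[OF compact_cube] by simp

lemma emeasure_cube: "emeasure lborel (cube M :: (real^'p) set) < \<infinity>"
  using compact_cube emeasure_compact_finite by blast

lemma indicator_cube: "(indicator (cube M) (x::real^'p) :: ennreal) = (\<Prod>b\<in>Basis. indicator {-M..M} (x \<bullet> b))"
  unfolding prod_Basis_cart by (auto simp: cube_def inner_axis indicator_def prod_zero_iff)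

lemma nn_sq_1d: assumes "M > 0"
  shows "(\<integral>\<^sup>+t. ennreal (t^2) * indicator {-M..M} t \<partial>lborel) = ennreal (2 * M^3 / 3)"
proof -
  have "(\<integral>\<^sup>+t. ennreal (t^2) * indicator {-M..M} t \<partial>lborel) = (\<lambda>t. t^3/3) M - (\<lambda>t. t^3/3) (-M)"
    by (rule nn_integral_FTC_Icc) (auto intro!: derivative_eq_intros simp: assms less_imp_le)
  then show ?thesis by (simp add: power3_eq_cube mult_ac)
qed

lemma coord_sq_integral:
  fixes i :: "'p::finite"
  assumes "M > 0"
  shows "(LINT x:cube M|lborel. (x$i)^2) = (2*M)^CARD('p) * M^2/3"
proof -
  define f where "f b t = (if b = axis i 1 then ennreal (t^2) else 1) * indicator {-M..M} t" for b :: "real^'p" and t :: real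
  have eq1: "indicator (cube M) x * ennreal ((x$i)^2) = (\<Prod>b\<in>Basis. f b (x \<bullet> b))" for x :: "real^'p"
  proof -
    have "(\<Prod>b\<in>Basis. f b (x \<bullet> b)) = (\<Prod>j\<in>UNIV. (if j = i then ennreal ((x$j)^2) else 1) * indicator {-M..M} (x$j))"
      unfolding prod_Basis_cart f_def by (intro prod.cong refl) (auto simp: inner_axis axis_eq_axis)
    also have "\<dots> = (\<Prod>j\<in>UNIV. (if j = i then ennreal ((x$j)^2) else 1)) * (\<Prod>j\<in>UNIV. indicator {-M..M} (x$j))"
      by (rule prod.distrib)
    also have "\<dots> = ennreal ((x$i)^2) * indicator (cube M) x"
      by (simp add: indicator_cube prod_Basis_cart inner_axis)
    finally show ?thesis by (simp add: mult.commute)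
  qed
  have "(\<integral>\<^sup>+x. indicator (cube M) x * ennreal ((x$i)^2) \<partial>lborel) = (\<Prod>b\<in>Basis. (\<integral>\<^sup>+t. f b t \<partial>lborel))"
    unfolding eq1 by (rule nn_integral_lborel_prod) (auto simp: f_def)
  also have "\<dots> = (\<Prod>j\<in>UNIV. (\<integral>\<^sup>+t. f (axis j 1) t \<partial>lborel))"
    by (rule prod_Basis_cart)
  also have "\<dots> = (\<Prod>j\<in>UNIV. (if j = i then ennreal (2 * M^3 / 3) else ennreal (2*M)))"
  proof (rule prod.cong[OF refl])
    fix j :: 'p
    show "(\<integral>\<^sup>+t. f (axis j 1) t \<partial>lborel) = (if j = i then ennreal (2 * M^3 / 3) else ennreal (2*M))"
    proof (cases "j = i")
      case True
      then show ?thesis using nn_sq_1d[OF assms] by (simp add: f_def)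
    next
      case False
      then show ?thesis using assms by (simp add: f_def axis_eq_axis)
    qed
  qed
  also have "\<dots> = ennreal (2 * M^3 / 3) * (\<Prod>j\<in>UNIV-{i}. ennreal (2*M))"
    by (subst prod.remove[of UNIV i]) auto
  also have "\<dots> = ennreal ((2*M)^CARD('p) * M^2/3)"
  proof -
    define n where "n = card (UNIV - {i})"
    have c: "CARD('p) = Suc n" unfolding n_def by (simp add: card_Diff_singleton)
    have A: "(\<Prod>j\<in>UNIV-{i}. ennreal (2*M)) = ennreal ((2*M)^n)"
    proof -
      have "0 \<le> 2*M" using assms by simp
      then show ?thesis by (simp only: n_def prod_constant ennreal_power[OF \<open>0 \<le> 2*M\<close>])
    qed
    have B: "ennreal (2*M^3/3) * ennreal ((2*M)^n) = ennreal (2*M^3/3 * (2*M)^n)"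
      using assms by (intro ennreal_mult[symmetric]) auto
    have C: "2*M^3/3 * (2*M)^n = (2*M)^CARD('p) * M^2/3"
      unfolding c by (simp add: power3_eq_cube power2_eq_square)
    show ?thesis by (simp only: A B C)
  qed
  finally have nn: "(\<integral>\<^sup>+x. indicator (cube M) x * ennreal ((x$i)^2) \<partial>lborel) = ennreal ((2*M)^CARD('p) * M^2/3)" .
  have int: "integrable lborel (\<lambda>x::real^'p. indicator (cube M) x *\<^sub>R (x$i)^2)"
    by (rule borel_integrable_compact[OF compact_cube]) (intro continuous_intros)
  have "(\<integral>\<^sup>+x. ennreal (indicator (cube M) x *\<^sub>R (x$i)^2) \<partial>lborel) = ennreal (\<integral>x. indicator (cube M) x *\<^sub>R (x$i)^2 \<partial>lborel)"
    by (rule nn_integral_eq_integral[OF int]) auto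
  moreover have "(\<integral>\<^sup>+x. ennreal (indicator (cube M) x *\<^sub>R (x$i)^2) \<partial>lborel) = (\<integral>\<^sup>+x. indicator (cube M) x * ennreal ((x$i)^2) \<partial>lborel)"
    by (intro nn_integral_cong) (auto split: split_indicator)
  ultimately have "ennreal (\<integral>x. indicator (cube M) x *\<^sub>R (x$i)^2 \<partial>lborel) = ennreal ((2*M)^CARD('p) * M^2/3)"
    using nn by simp
  then show ?thesis unfolding set_lebesgue_integral_def
    using assms by (subst (asm) ennreal_inj) (auto intro!: integral_nonneg_AE)
qed

lemma lborel_uminus_eq: "distr lborel borel uminus = (lborel :: ('a::euclidean_space) measure)"
proof -
  have "lborel = density (distr lborel borel (\<lambda>x::'a. 0 + (-1::real) *\<^sub>R x)) (\<lambda>_. \<bar>-1::real\<bar>^DIM('a))"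
    by (rule lborel_affine) simp
  then show ?thesis by (simp add: density_1)
qed

lemma cube_mean_zero: "(LINT x:cube M|lborel. x) = (0::real^'p)"
proof -
  have "(\<integral>x. indicator (cube M) x *\<^sub>R (x::real^'p) \<partial>lborel) = (\<integral>x. indicator (cube M) x *\<^sub>R x \<partial>distr lborel borel uminus)"
    by (simp add: lborel_uminus_eq)
  also have "\<dots> = (\<integral>x. indicator (cube M) (-x) *\<^sub>R (-x) \<partial>lborel)"
    by (subst integral_distr) auto
  also have "\<dots> = (\<integral>x. - (indicator (cube M) x *\<^sub>R x) \<partial>lborel)"
  proof -
    have "(-x \<in> cube M) = ((x::real^'p) \<in> cube M)" for x
      unfolding cube_def apply auto  by (metis minus_minus neg_le_iff_le)+
    then have ii: "indicator (cube M) (-x) = (indicator (cube M) x :: real)" for x :: "real^'p"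
      by (simp add: indicator_def)
    show ?thesis by (simp only: ii scaleR_minus_right)
  qed
  also have "\<dots> = - (\<integral>x. indicator (cube M) x *\<^sub>R x \<partial>lborel)"
    by (rule integral_minus)
  finally have h: "(\<integral>x. indicator (cube M) x *\<^sub>R (x::real^'p) \<partial>lborel) = - (\<integral>x. indicator (cube M) x *\<^sub>R x \<partial>lborel)" .
  define v where "v = (\<integral>x. indicator (cube M) x *\<^sub>R (x::real^'p) \<partial>lborel)"
  have "v = - v" using h unfolding v_def .
  then have "v + v = 0" by (metis add.right_inverse)
  then have "(2::real) *\<^sub>R v = 0" by (simp add: scaleR_2)
  then have "v = 0" by simp
  then show ?thesis unfolding set_lebesgue_integral_def v_def .
qed

lemma set_integral_inner_left':
  fixes f :: "'a \<Rightarrow> 'b::{euclidean_space}"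
  assumes "set_integrable M S f"
  shows "(LINT x:S|M. f x \<bullet> c) = (LINT x:S|M. f x) \<bullet> c"
  using assms unfolding set_lebesgue_integral_def set_integrable_def
  by (subst integral_inner_left[symmetric]) (auto intro!: Bochner_Integration.integral_cong)

lemma set_integral_inner_right':
  fixes f :: "'a \<Rightarrow> 'b::{euclidean_space}"
  assumes "set_integrable M S f"
  shows "(LINT x:S|M. c \<bullet> f x) = c \<bullet> (LINT x:S|M. f x)"
  using assms unfolding set_lebesgue_integral_def set_integrable_def
  by (subst integral_inner_right[symmetric]) (auto intro!: Bochner_Integration.integral_cong)

lemma cont_set_integrable:
  fixes f :: "real^'p \<Rightarrow> 'b::{banach, second_countable_topology}"
  assumes "continuous_on UNIV f"
  shows "set_integrable lborel (cube M) f"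
  unfolding set_integrable_def
  by (rule borel_integrable_compact[OF compact_cube]) (rule continuous_on_subset[OF assms], simp)

lemma sq_norm_integral:
  assumes "M > 0"
  shows "(LINT x:cube M|lborel. (norm (x::real^'p))^2) = real CARD('p) * ((2*M)^CARD('p) * M^2/3)"
proof -
  have nx: "(norm (x::real^'p))^2 = (\<Sum>i\<in>UNIV. (x$i)^2)" for x
    by (simp add: norm_vec_def L2_set_def sum_nonneg)
  have "(LINT x:cube M|lborel. (norm (x::real^'p))^2) = (LINT x:cube M|lborel. (\<Sum>i\<in>UNIV. ((x::real^'p)$i)^2))"
    by (simp only: nx)
  also have "\<dots> = (\<Sum>i\<in>UNIV. (LINT x:cube M|lborel. ((x::real^'p)$i)^2))"
    unfolding set_lebesgue_integral_def scaleR_sum_right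
    by (rule Bochner_Integration.integral_sum) (rule cont_set_integrable[unfolded set_integrable_def], intro continuous_intros)
  also have "\<dots> = real CARD('p) * ((2*M)^CARD('p) * M^2/3)"
  proof -
    have e: "(LINT x:cube M|lborel. ((x::real^'p)$i)^2) = (2*M)^CARD('p) * M^2/3" for i :: 'p
      by (rule coord_sq_integral[OF assms])
    show ?thesis by (simp only: e sum_constant)
  qed
  finally show ?thesis .
qed

lemma prod_set_integrable:
  fixes F :: "(real^'p) \<times> (real^'p) \<Rightarrow> real"
  assumes "continuous_on UNIV F"
  shows "set_integrable lborel (cube M) (\<lambda>x'. LINT x:cube M|lborel. F (x', x))"
proof -
  let ?S = "cube M :: (real^'p) set"
  have "integrable lborel (\<lambda>z. indicator (?S \<times> ?S) z *\<^sub>R F z)"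
    by (rule borel_integrable_compact) (auto intro: compact_Times compact_cube continuous_on_subset[OF assms])
  then have "integrable (lborel \<Otimes>\<^sub>M lborel) (\<lambda>z. indicator (?S \<times> ?S) z *\<^sub>R F z)"
    unfolding lborel_prod .
  from lborel_pair.integrable_fst'[OF this]
  have "integrable lborel (\<lambda>x'. \<integral>x. indicator (?S \<times> ?S) (x', x) *\<^sub>R F (x', x) \<partial>lborel)" by simp
  moreover have "(\<integral>x. indicator (?S \<times> ?S) (x', x) *\<^sub>R F (x', x) \<partial>lborel) = indicator ?S x' *\<^sub>R (LINT x:?S|lborel. F (x', x))" for x'
    unfolding set_lebesgue_integral_def
    by (cases "x' \<in> ?S") (auto simp: indicator_def)
  ultimately show ?thesis unfolding set_integrable_def by simp
qed

lemma key_bound: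
  fixes M :: real and \<phi> :: "real ^ 'p \<Rightarrow> real ^ 'k"
  assumes "M > 0" and cphi: "continuous_on UNIV \<phi>"
  shows "2 * (2*M)^CARD('p) * (real CARD('p) * ((2*M)^CARD('p) * M^2/3)) \<le>
    (LINT x' : cube M | lborel. (LINT x : cube M | lborel.
               \<bar>- (norm (x - x'))\<^sup>2 - inner (\<phi> x) (\<phi> x')\<bar>))"
proof -
  let ?S = "cube M :: (real^'p) set"
  define V where "V = (2*M)^CARD('p)"
  define A where "A = real CARD('p) * ((2*M)^CARD('p) * M^2/3)"
  define \<Phi> where "\<Phi> = (LINT x:?S|lborel. \<phi> x)"
  have mS: "measure lborel ?S = V" unfolding V_def by (rule measure_cube[OF assms(1)])
  have eS: "emeasure lborel ?S \<noteq> \<infinity>" using emeasure_cube by (simp add: less_top)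
  have c1: "continuous_on UNIV (\<lambda>z::(real^'p) \<times> (real^'p). \<phi> (snd z))"
    by (rule continuous_on_compose2[OF cphi continuous_on_snd]) auto
  have c2: "continuous_on UNIV (\<lambda>z::(real^'p) \<times> (real^'p). \<phi> (fst z))"
    by (rule continuous_on_compose2[OF cphi continuous_on_fst]) auto
  have gi: "set_integrable lborel ?S (\<lambda>x'. LINT x:?S|lborel. \<bar>- (norm (x - x'))\<^sup>2 - inner (\<phi> x) (\<phi> x')\<bar>)"
    using prod_set_integrable[of "\<lambda>z. \<bar>- (norm (snd z - fst z))\<^sup>2 - inner (\<phi> (snd z)) (\<phi> (fst z))\<bar>" M]
    by (simp add: continuous_intros c1 c2)
  have pw: "A + V*(norm x')^2 + \<Phi> \<bullet> \<phi> x' \<le> (LINT x:?S|lborel. \<bar>- (norm (x - x'))\<^sup>2 - inner (\<phi> x) (\<phi> x')\<bar>)" for x'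
  proof -
    have i1: "set_integrable lborel ?S (\<lambda>x. (norm x)^2 - 2 * (x \<bullet> x') + (norm x')^2 + \<phi> x \<bullet> \<phi> x')"
      by (rule cont_set_integrable) (intro continuous_intros cphi)
    have i2: "set_integrable lborel ?S (\<lambda>x. \<bar>- (norm (x - x'))\<^sup>2 - inner (\<phi> x) (\<phi> x')\<bar>)"
      by (rule cont_set_integrable) (intro continuous_intros cphi)
    have nd: "(norm (x - x'))^2 = (norm x)^2 - 2 * (x \<bullet> x') + (norm x')^2" for x :: "real^'p"
      by (simp add: power2_norm_eq_inner inner_diff_left inner_diff_right inner_commute)
    have "(LINT x:?S|lborel. (norm x)^2 - 2 * (x \<bullet> x') + (norm x')^2 + \<phi> x \<bullet> \<phi> x') \<le>
          (LINT x:?S|lborel. \<bar>- (norm (x - x'))\<^sup>2 - inner (\<phi> x) (\<phi> x')\<bar>)"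
    proof (rule set_integral_mono[OF i1 i2])
      fix x :: "real^'p"
      have t: "t \<le> \<bar>- t\<bar>" for t :: real by simp
      show "(norm x)^2 - 2 * (x \<bullet> x') + (norm x')^2 + \<phi> x \<bullet> \<phi> x' \<le> \<bar>- (norm (x - x'))\<^sup>2 - inner (\<phi> x) (\<phi> x')\<bar>"
      proof -
        have e: "- (norm (x - x'))\<^sup>2 - inner (\<phi> x) (\<phi> x') = - ((norm x)^2 - 2 * (x \<bullet> x') + (norm x')^2 + \<phi> x \<bullet> \<phi> x')"
          by (simp only: nd)
        show ?thesis by (simp only: e)
      qed
    qed
    moreover have "(LINT x:?S|lborel. (norm x)^2 - 2 * (x \<bullet> x') + (norm x')^2 + \<phi> x \<bullet> \<phi> x') = A + V*(norm x')^2 + \<Phi> \<bullet> \<phi> x'"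
    proof -
      have j1: "set_integrable lborel ?S (\<lambda>x. (norm x)^2)" by (rule cont_set_integrable) (intro continuous_intros)
      have j2: "set_integrable lborel ?S (\<lambda>x. 2 * (x \<bullet> x'))" by (rule cont_set_integrable) (intro continuous_intros)
      have j3: "set_integrable lborel ?S (\<lambda>x::real^'p. (norm x')^2)" by (rule cont_set_integrable) (intro continuous_intros)
      have j4: "set_integrable lborel ?S (\<lambda>x. \<phi> x \<bullet> \<phi> x')" by (rule cont_set_integrable) (intro continuous_intros cphi)
      have j5: "set_integrable lborel ?S (\<lambda>x. x)" by (rule cont_set_integrable) (intro continuous_intros)
      have j6: "set_integrable lborel ?S \<phi>" by (rule cont_set_integrable) (rule cphi)
      have "(LINT x:?S|lborel. (norm x)^2 - 2 * (x \<bullet> x') + (norm x')^2 + \<phi> x \<bullet> \<phi> x')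
         = (LINT x:?S|lborel. (norm x)^2) - (LINT x:?S|lborel. 2 * (x \<bullet> x')) + (LINT x:?S|lborel. (norm x')^2) + (LINT x:?S|lborel. \<phi> x \<bullet> \<phi> x')"
        using j1 j2 j3 j4 by (simp add: set_integral_add set_integral_diff)
      also have "(LINT x:?S|lborel. (norm x)^2) = A" unfolding A_def by (rule sq_norm_integral[OF assms(1)])
      also have "(LINT x:?S|lborel. 2 * (x \<bullet> x')) = 0"
        using set_integral_inner_left'[OF j5, of x'] by (simp add: cube_mean_zero)
      also have "(LINT x:?S|lborel. (norm x')^2) = V * (norm x')^2"
        using set_integral_const[OF cube_sets eS, of "(norm x')^2"] mS by simp
      also have "(LINT x:?S|lborel. \<phi> x \<bullet> \<phi> x') = \<Phi> \<bullet> \<phi> x'"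
        unfolding \<Phi>_def by (rule set_integral_inner_left'[OF j6])
      finally show ?thesis by simp
    qed
    ultimately show ?thesis by simp
  qed
  have hi: "set_integrable lborel ?S (\<lambda>x'. A + V*(norm x')^2 + \<Phi> \<bullet> \<phi> x')"
    by (rule cont_set_integrable) (intro continuous_intros cphi)
  have "(LINT x':?S|lborel. A + V*(norm x')^2 + \<Phi> \<bullet> \<phi> x') \<le>
      (LINT x' : ?S | lborel. (LINT x : ?S | lborel. \<bar>- (norm (x - x'))\<^sup>2 - inner (\<phi> x) (\<phi> x')\<bar>))"
    by (rule set_integral_mono[OF hi gi pw])
  moreover have "(LINT x':?S|lborel. A + V*(norm x')^2 + \<Phi> \<bullet> \<phi> x') = V*A + V*A + \<Phi> \<bullet> \<Phi>"
  proof -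
    have j1: "set_integrable lborel ?S (\<lambda>x. (norm x)^2)" by (rule cont_set_integrable) (intro continuous_intros)
    have j3: "set_integrable lborel ?S (\<lambda>x::real^'p. A)" by (rule cont_set_integrable) (intro continuous_intros)
    have j4: "set_integrable lborel ?S (\<lambda>x. \<Phi> \<bullet> \<phi> x)" by (rule cont_set_integrable) (intro continuous_intros cphi)
    have j6: "set_integrable lborel ?S \<phi>" by (rule cont_set_integrable) (rule cphi)
    have "(LINT x':?S|lborel. A + V*(norm x')^2 + \<Phi> \<bullet> \<phi> x') =
       (LINT x':?S|lborel. A) + V * (LINT x':?S|lborel. (norm x')^2) + (LINT x':?S|lborel. \<Phi> \<bullet> \<phi> x')"
      using j1 j3 j4 by (simp add: set_integral_add)
    also have "(LINT x':?S|lborel. A) = V * A"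
      using set_integral_const[OF cube_sets eS, of A] mS by simp
    also have "(LINT x':?S|lborel. (norm x')^2) = A" unfolding A_def by (rule sq_norm_integral[OF assms(1)])
    also have "(LINT x':?S|lborel. \<Phi> \<bullet> \<phi> x') = \<Phi> \<bullet> \<Phi>"
      unfolding \<Phi>_def by (rule set_integral_inner_right'[OF j6])
    finally show ?thesis .
  qed
  moreover have "0 \<le> \<Phi> \<bullet> \<Phi>" by simp
  ultimately have fin: "2 * V * A \<le> (LINT x' : ?S | lborel. (LINT x : ?S | lborel. \<bar>- (norm (x - x'))\<^sup>2 - inner (\<phi> x) (\<phi> x')\<bar>))"
    by linarith
  then show ?thesis by (simp only: V_def A_def)
qed

theorem proposition4p1:
  fixes M :: real
  assumes "M > 0"
  shows "(INF \<phi> \<in> {\<phi> :: real ^ 'p \<Rightarrow> real ^ 'k. continuous_on UNIV \<phi>}.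
            1 / (2 * M) ^ (2 * CARD('p)) *
            (LINT x' : cube M | lborel. (LINT x : cube M | lborel.
               \<bar>- (norm (x - x'))\<^sup>2 - inner (\<phi> x) (\<phi> x')\<bar>)))
         \<ge> 2 * real CARD('p) * M\<^sup>2 / 3"
proof (rule cINF_greatest)
  show "{\<phi> :: real ^ 'p \<Rightarrow> real ^ 'k. continuous_on UNIV \<phi>} \<noteq> {}"
    using continuous_on_const[of UNIV "0::real^'k"] by blast
next
  fix \<phi> :: "real ^ 'p \<Rightarrow> real ^ 'k"
  assume "\<phi> \<in> {\<phi>. continuous_on UNIV \<phi>}"
  then have c: "continuous_on UNIV \<phi>" by simp
  define V where "V = (2*M)^CARD('p)"
  define I where "I = (LINT x' : cube M | lborel. (LINT x : cube M | lborel.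
               \<bar>- (norm (x - x'))\<^sup>2 - inner (\<phi> x) (\<phi> x')\<bar>))"
  have k: "2 * V * (real CARD('p) * (V * M^2/3)) \<le> I"
    using key_bound[OF assms c] unfolding V_def I_def .
  have Vp: "V > 0" unfolding V_def using assms by simp
  have V2: "(2 * M) ^ (2 * CARD('p)) = V^2" unfolding V_def by (metis power_mult mult.commute)
  have "2 * real CARD('p) * M\<^sup>2 / 3 = 1 / V^2 * (2 * V * (real CARD('p) * (V * M^2/3)))"
    using Vp by (simp add: field_simps power2_eq_square)
  also have "\<dots> \<le> 1 / V^2 * I"
    using k Vp by (intro mult_left_mono) auto
  finally show "2 * real CARD('p) * M\<^sup>2 / 3 \<le> 1 / (2 * M) ^ (2 * CARD('p)) *
            (LINT x' : cube M | lborel. (LINT x : cube M | lborel.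
               \<bar>- (norm (x - x'))\<^sup>2 - inner (\<phi> x) (\<phi> x')\<bar>))"
    unfolding V2 I_def .
qed

end
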